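(* Fix a real number $\beta>-1$. If $\phi$ is a hyperbolic linear fractional self-map of $\mathbb{D}$, then the composition operator $C_\phi f=f\circ\phi$ is not complex symmetric on $A^2_\beta$.
   Context: $\mathbb{D}$ is the open unit disc and $\mathbb{T}$ the unit circle. For $\beta>-1$, $A^2_\beta$ is the Hilbert space of analytic functions $f(z)=\sum_{n\ge0}\widehat f(n)z^n$ on $\mathbb{D}$ with inner product $\langle f,g\rangle=\sum_{n\ge0}\frac{n!\,\Gamma(2+\beta)}{\Gamma(n+2+\beta)}\widehat f(n)\overline{\widehat g(n)}$ (equivalently the $L^2$ inner product with respect to $(\beta+1)(1-|z|^2)^\beta dA(z)$). A conjugation is a conjugate-linear map $C$ with $C^2=I$ and $\langle Cf,Cg\rangle=\langle g,f\rangle$; a bounded operator $T$ is complex symmetric if $CT=T^*C$ for some conjugation $C$. A linear fractional self-map of $\mathbb{D}$ is a map $\phi(z)=(az+b)/(cz+d)$ (with $ad-bc\neq0$) mapping $\mathbb{D}$ into $\mathbb{D}$. Following the paper, such a $\phi$ is called hyperbolic if it has an attractive fixed point $\omega\in\overline{\mathbb{D}}$ (the iterates $\phi^{[n]}$ converge to $\omega$ uniformly on compact subsets of $\mathbb{D}$) and its other fixed point lies outside $\mathbb{D}$; both fixed points lie on $\mathbb{T}$ exactly when $\phi$ is an automorphism. The paper separately calls parabolic those maps whose (unique) fixed point lies on $\mathbb{T}$, and loxodromic or elliptic those with one fixed point in $\mathbb{D}$ and the other outside $\overline{\mathbb{D}}$; these are not hyperbolic. *)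

theory Defs
  imports "HOL-Analysis.Analysis"
begin

definition taylor_coeff :: "(complex \<Rightarrow> complex) \<Rightarrow> nat \<Rightarrow> complex" where
  "taylor_coeff f n = (deriv ^^ n) f 0 / of_nat (fact n)"

definition bergman_weight :: "real \<Rightarrow> nat \<Rightarrow> real" where
  "bergman_weight \<beta> n = fact n * Gamma (2 + \<beta>) / Gamma (real n + 2 + \<beta>)"

text \<open>Normalisation convention: elements are taken to vanish outside the disc, so that
  equality of elements is equality of functions.\<close>
definition A2 :: "real \<Rightarrow> (complex \<Rightarrow> complex) set" where
  "A2 \<beta> = {f. f holomorphic_on ball 0 1 \<and> (\<forall>z. z \<notin> ball 0 1 \<longrightarrow> f z = 0) \<and>
              summable (\<lambda>n. bergman_weight \<beta> n * (norm (taylor_coeff f n))\<^sup>2)}"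

definition A2_inner :: "real \<Rightarrow> (complex \<Rightarrow> complex) \<Rightarrow> (complex \<Rightarrow> complex) \<Rightarrow> complex" where
  "A2_inner \<beta> f g = (\<Sum>n. complex_of_real (bergman_weight \<beta> n) * taylor_coeff f n * cnj (taylor_coeff g n))"

definition is_conjugation :: "real \<Rightarrow> ((complex \<Rightarrow> complex) \<Rightarrow> (complex \<Rightarrow> complex)) \<Rightarrow> bool" where
  "is_conjugation \<beta> C \<longleftrightarrow>
     (\<forall>f\<in>A2 \<beta>. C f \<in> A2 \<beta>) \<and>
     (\<forall>f\<in>A2 \<beta>. \<forall>g\<in>A2 \<beta>. C (\<lambda>z. f z + g z) = (\<lambda>z. C f z + C g z)) \<and>
     (\<forall>f\<in>A2 \<beta>. \<forall>a. C (\<lambda>z. a * f z) = (\<lambda>z. cnj a * C f z)) \<and>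
     (\<forall>f\<in>A2 \<beta>. C (C f) = f) \<and>
     (\<forall>f\<in>A2 \<beta>. \<forall>g\<in>A2 \<beta>. A2_inner \<beta> (C f) (C g) = A2_inner \<beta> g f)"

definition is_adjoint :: "real \<Rightarrow> ((complex \<Rightarrow> complex) \<Rightarrow> (complex \<Rightarrow> complex))
                          \<Rightarrow> ((complex \<Rightarrow> complex) \<Rightarrow> (complex \<Rightarrow> complex)) \<Rightarrow> bool" where
  "is_adjoint \<beta> T T' \<longleftrightarrow>
     (\<forall>f\<in>A2 \<beta>. T f \<in> A2 \<beta>) \<and> (\<forall>g\<in>A2 \<beta>. T' g \<in> A2 \<beta>) \<and>
     (\<forall>f\<in>A2 \<beta>. \<forall>g\<in>A2 \<beta>. A2_inner \<beta> (T f) g = A2_inner \<beta> f (T' g))"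

definition complex_symmetric :: "real \<Rightarrow> ((complex \<Rightarrow> complex) \<Rightarrow> (complex \<Rightarrow> complex)) \<Rightarrow> bool" where
  "complex_symmetric \<beta> T \<longleftrightarrow>
     (\<exists>C T'. is_conjugation \<beta> C \<and> is_adjoint \<beta> T T' \<and> (\<forall>f\<in>A2 \<beta>. C (T f) = T' (C f)))"

definition comp_op :: "(complex \<Rightarrow> complex) \<Rightarrow> (complex \<Rightarrow> complex) \<Rightarrow> (complex \<Rightarrow> complex)" where
  "comp_op \<phi> f = (\<lambda>z. if z \<in> ball 0 1 then f (\<phi> z) else 0)"

definition lf_selfmap_coeffs :: "(complex \<Rightarrow> complex) \<Rightarrow> complex \<Rightarrow> complex \<Rightarrow> complex \<Rightarrow> complex \<Rightarrow> bool" where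
  "lf_selfmap_coeffs \<phi> a b c d \<longleftrightarrow>
     a * d - b * c \<noteq> 0 \<and> (\<forall>z. \<phi> z = (a * z + b) / (c * z + d)) \<and>
     (\<forall>z\<in>ball 0 1. c * z + d \<noteq> 0 \<and> \<phi> z \<in> ball 0 1)"

text \<open>Hyperbolic: attractive (Denjoy--Wolff) fixed point omega on the unit circle, and a second
  fixed point (in the Riemann sphere: a finite one, or infinity when c = 0) outside the open disc.\<close>
definition hyperbolic_lf :: "(complex \<Rightarrow> complex) \<Rightarrow> bool" where
  "hyperbolic_lf \<phi> \<longleftrightarrow>
     (\<exists>a b c d \<omega>. lf_selfmap_coeffs \<phi> a b c d \<and>
        norm \<omega> = 1 \<and> c * \<omega> + d \<noteq> 0 \<and> \<phi> \<omega> = \<omega> \<and>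
        (\<forall>K. compact K \<and> K \<subseteq> ball 0 1 \<longrightarrow> uniform_limit K (\<lambda>n. \<phi> ^^ n) (\<lambda>_. \<omega>) sequentially) \<and>
        (c = 0 \<or> (\<exists>\<eta>. \<eta> \<noteq> \<omega> \<and> c * \<eta> + d \<noteq> 0 \<and> \<phi> \<eta> = \<eta> \<and> norm \<eta> \<ge> 1)))"

end

theory Submission
  imports Defs "HOL-Complex_Analysis.Complex_Analysis"
begin

lemma gamma_ge_fact:
  fixes \<beta> :: real assumes "\<beta> > -1"
  shows "Gamma (real n + 2 + \<beta>) \<ge> fact n * Gamma (2 + \<beta>)"
proof (induction n)
  case 0 then show ?case by simp
next
  case (Suc n)
  have pos: "Gamma (real n + 2 + \<beta>) > 0" using assms by (intro Gamma_real_pos) simp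
  have nz: "(real n + 2 + \<beta>) \<notin> \<int>\<^sub>\<le>\<^sub>0" using assms nonpos_Ints_nonpos by force
  have "Gamma (real (Suc n) + 2 + \<beta>) = Gamma ((real n + 2 + \<beta>) + 1)" by (simp add: algebra_simps)
  also have "\<dots> = (real n + 2 + \<beta>) * Gamma (real n + 2 + \<beta>)" using Gamma_plus1[OF nz] .
  finally have eq: "Gamma (real (Suc n) + 2 + \<beta>) = (real n + 2 + \<beta>) * Gamma (real n + 2 + \<beta>)" .
  have g2: "Gamma (2 + \<beta>) > 0" using assms by (intro Gamma_real_pos) simp
  have "fact (Suc n) * Gamma (2 + \<beta>) = (real n + 1) * (fact n * Gamma (2 + \<beta>))" by simp
  also have "\<dots> \<le> (real n + 2 + \<beta>) * Gamma (real n + 2 + \<beta>)"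
    using Suc assms g2 by (intro mult_mono) (auto intro!: mult_nonneg_nonneg)
  finally show ?case using eq by simp
qed

lemma bw_pos: assumes "\<beta> > -1" shows "bergman_weight \<beta> n > 0"
  unfolding bergman_weight_def using assms
  by (intro divide_pos_pos mult_pos_pos Gamma_real_pos) auto

lemma bw_le1: assumes "\<beta> > -1" shows "bergman_weight \<beta> n \<le> 1"
proof -
  have "Gamma (real n + 2 + \<beta>) > 0" using assms by (intro Gamma_real_pos) simp
  then show ?thesis unfolding bergman_weight_def using gamma_ge_fact[OF assms, of n]
    by (simp add: divide_le_eq)
qed

lemma bw_0: assumes "\<beta> > -1" shows "bergman_weight \<beta> 0 = 1"
proof -
  have "Gamma (2 + \<beta>) > 0" using assms by (intro Gamma_real_pos) simp
  then show ?thesis unfolding bergman_weight_def by (simp add: add.commute)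
qed

lemma taylor_coeff_cong:
  assumes "\<And>z. z \<in> ball 0 1 \<Longrightarrow> f z = g z"
  shows "taylor_coeff f n = taylor_coeff g n"
proof -
  have "eventually (\<lambda>z. z \<in> ball (0::complex) 1) (nhds 0)"
    by (intro eventually_nhds_in_open) auto
  then have "eventually (\<lambda>z. f z = g z) (nhds (0::complex))"
    by (rule eventually_mono) (use assms in auto)
  then show ?thesis unfolding taylor_coeff_def
    using higher_deriv_cong_ev by metis
qed

lemma taylor_coeff_power: "taylor_coeff (\<lambda>z. z ^ m) k = (if k = m then 1 else 0)"
proof -
  have "(deriv ^^ k) (\<lambda>w. (w - 0) ^ m) 0 = pochhammer (of_nat (Suc m - k)) k * (0 - 0) ^ (m - k)"
    by (rule higher_deriv_power)
  then have e: "(deriv ^^ k) (\<lambda>w. w ^ m) (0::complex) = pochhammer (of_nat (Suc m - k)) k * 0 ^ (m - k)"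
    by simp
  show ?thesis
  proof (cases "k = m")
    case True
    then show ?thesis using e unfolding taylor_coeff_def by (simp add: pochhammer_fact[symmetric])
  next
    case False
    then show ?thesis
    proof (cases "k < m")
      case True then show ?thesis using e unfolding taylor_coeff_def by simp
    next
      case False
      with \<open>k \<noteq> m\<close> have "Suc m - k = 0" "k > 0" by auto
      then show ?thesis using e \<open>k \<noteq> m\<close> unfolding taylor_coeff_def by (simp add: pochhammer_0_left)
    qed
  qed
qed

definition ind_pow :: "nat \<Rightarrow> complex \<Rightarrow> complex" where
  "ind_pow m = (\<lambda>z. if z \<in> ball 0 1 then z ^ m else 0)"

lemma taylor_coeff_ind_pow: "taylor_coeff (ind_pow m) k = (if k = m then 1 else 0)"
  using taylor_coeff_cong[of "ind_pow m" "\<lambda>z. z ^ m"] taylor_coeff_power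
  unfolding ind_pow_def by simp

lemma ind_pow_A2: assumes "\<beta> > -1" shows "ind_pow m \<in> A2 \<beta>"
proof -
  have "(\<lambda>z. z ^ m) holomorphic_on ball (0::complex) 1" by (intro holomorphic_intros)
  then have "ind_pow m holomorphic_on ball 0 1"
    by (rule holomorphic_transform) (simp add: ind_pow_def)
  moreover have "(\<lambda>n. bergman_weight \<beta> n * (norm (taylor_coeff (ind_pow m) n))\<^sup>2)
      = (\<lambda>n. if n = m then bergman_weight \<beta> n else 0)"
    by (auto simp: taylor_coeff_ind_pow)
  moreover have "summable (\<lambda>n. if n = m then bergman_weight \<beta> n else 0)"
    using sums_single sums_summable by blast
  ultimately show ?thesis unfolding A2_def by (auto simp: ind_pow_def)
qed

lemma inner_ind_pow: "A2_inner \<beta> (ind_pow m) g = bergman_weight \<beta> m * cnj (taylor_coeff g m)"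
proof -
  have eq: "(\<lambda>n. complex_of_real (bergman_weight \<beta> n) * taylor_coeff (ind_pow m) n * cnj (taylor_coeff g n))
      = (\<lambda>n. if n = m then complex_of_real (bergman_weight \<beta> n) * cnj (taylor_coeff g n) else 0)"
    by (auto simp: taylor_coeff_ind_pow)
  have "(\<lambda>n. complex_of_real (bergman_weight \<beta> n) * taylor_coeff (ind_pow m) n * cnj (taylor_coeff g n))
     sums (complex_of_real (bergman_weight \<beta> m) * cnj (taylor_coeff g m))"
    unfolding eq by (rule sums_single)
  then show ?thesis unfolding A2_inner_def by (rule sums_unique[symmetric])
qed

lemma A2_zero:
  assumes "g \<in> A2 \<beta>" "\<And>k. taylor_coeff g k = 0"
  shows "g = (\<lambda>z. 0)"
proof
  fix w show "g w = 0"
  proof (cases "w \<in> ball 0 1")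
    case True
    have hol: "g holomorphic_on ball 0 1" using assms unfolding A2_def by auto
    have "(\<lambda>n. (deriv ^^ n) g 0 / fact n * (w - 0) ^ n) sums g w"
      by (rule holomorphic_power_series[OF hol True])
    moreover have "(\<lambda>n. (deriv ^^ n) g 0 / fact n * (w - 0) ^ n) = (\<lambda>n. 0)"
      using assms(2) unfolding taylor_coeff_def by auto
    ultimately show ?thesis using sums_unique2[OF _ sums_zero] by simp
  next
    case False then show ?thesis using assms unfolding A2_def by auto
  qed
qed

lemma roots_sum:
  fixes N k l :: nat assumes "k < N" "l < N"
  shows "(\<Sum>j<N. (cis (2*pi/N) ^ k * cnj (cis (2*pi/N) ^ l)) ^ j) = (if k = l then of_nat N else 0)"
proof -
  have N0: "N > 0" using assms by simp
  define t where "t = 2 * pi * (real k - real l) / real N"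
  have u: "cis (2*pi/N) ^ k * cnj (cis (2*pi/N) ^ l) = cis t"
  proof -
    have "cis (2*pi/N) ^ k * cnj (cis (2*pi/N) ^ l) = cis (real k * (2*pi/N)) * cnj (cis (real l * (2*pi/N)))"
      by (simp only: Complex.DeMoivre)
    also have "\<dots> = cis (real k * (2*pi/N) + - (real l * (2*pi/N)))" by (simp only: cis_cnj cis_mult)
    also have "real k * (2*pi/N) + - (real l * (2*pi/N)) = t" unfolding t_def using N0 by (simp add: field_simps)
    finally show ?thesis .
  qed
  show ?thesis
  proof (cases "k = l")
    case True
    then have "t = 0" unfolding t_def by simp
    then show ?thesis using u True by simp
  next
    case False
    have N0: "N > 0" using assms by simp
    have ne: "cis t \<noteq> 1"
    proof
      assume "cis t = 1"
      then have "cos t = 1" by (metis cis.simps(1) one_complex.simps(1))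
      then obtain n :: int where n: "t = real_of_int n * 2 * pi" using cos_one_2pi_int by blast
      then have "2*pi*(real k - real l) / real N = 2*pi*(real_of_int n)" unfolding t_def
        by (simp add: algebra_simps)
      then have "2*pi*(real k - real l) = 2*pi*(real_of_int n * real N)" using N0
        by (simp add: field_simps)
      then have "real k - real l = real_of_int n * real N"
        using pi_gt_zero by (simp only: mult_cancel_left) simp
      then have "int k - int l = n * int N" by (metis of_int_eq_iff of_int_mult of_int_diff of_int_of_nat_eq)
      moreover have "\<bar>int k - int l\<bar> < int N" using assms by auto
      moreover have "int k - int l \<noteq> 0" using False by simp
      ultimately show False
        by (metis abs_mult abs_of_nat mult_le_cancel_right1 abs_ge_zero linorder_not_le mult_eq_0_iff not_le zero_less_abs_iff
             int_one_le_iff_zero_less of_nat_0_less_iff N0 abs_zero zero_less_one_class.zero_le_one)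
    qed
    have "cis t ^ N = cis (2 * pi * (real_of_int (int k - int l)))"
    proof -
      have "real N * t = 2 * pi * (real_of_int (int k - int l))"
        unfolding t_def using N0 by (simp add: field_simps)
      then show ?thesis by (simp only: Complex.DeMoivre)
    qed
    also have "\<dots> = 1" by (intro cis_multiple_2pi) auto
    finally have "cis t ^ N = 1" .
    then show ?thesis using u False ne geometric_sum[OF ne, of N] by simp
  qed
qed

lemma disc_parseval:
  fixes a :: "nat \<Rightarrow> complex" and N :: nat
  defines "\<zeta> \<equiv> cis (2*pi/N)"
  shows "(\<Sum>j<N. (norm (\<Sum>k<N. a k * (\<zeta>^j)^k))\<^sup>2) = real N * (\<Sum>k<N. (norm (a k))\<^sup>2)"
proof -
  have tm: "a k * (\<zeta>^j)^k * cnj (a l * (\<zeta>^j)^l) = a k * cnj (a l) * (\<zeta>^k * cnj (\<zeta>^l))^j"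
    for j k l :: nat
  proof -
    have "(\<zeta>^j)^k = (\<zeta>^k)^j" by (simp add: power_mult[symmetric] mult.commute)
    moreover have "(\<zeta>^j)^l = (\<zeta>^l)^j" by (simp add: power_mult[symmetric] mult.commute)
    ultimately show ?thesis by (simp add: power_mult_distrib complex_cnj_power)
  qed
  have "complex_of_real (\<Sum>j<N. (norm (\<Sum>k<N. a k * (\<zeta>^j)^k))\<^sup>2)
      = (\<Sum>j<N. (\<Sum>k<N. a k * (\<zeta>^j)^k) * cnj (\<Sum>l<N. a l * (\<zeta>^j)^l))"
    by (simp only: of_real_sum complex_norm_square)
  also have "\<dots> = (\<Sum>j<N. \<Sum>k<N. \<Sum>l<N. a k * cnj (a l) * (\<zeta>^k * cnj (\<zeta>^l))^j)"
    by (simp only: cnj_sum sum_product tm)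
  also have "\<dots> = (\<Sum>k<N. \<Sum>j<N. \<Sum>l<N. a k * cnj (a l) * (\<zeta>^k * cnj (\<zeta>^l))^j)"
    by (rule sum.swap)
  also have "\<dots> = (\<Sum>k<N. \<Sum>l<N. \<Sum>j<N. a k * cnj (a l) * (\<zeta>^k * cnj (\<zeta>^l))^j)"
    by (rule sum.cong[OF refl], rule sum.swap)
  also have "\<dots> = (\<Sum>k<N. \<Sum>l<N. a k * cnj (a l) * (if k = l then of_nat N else 0))"
    by (intro sum.cong refl) (simp only: sum_distrib_left[symmetric] \<zeta>_def roots_sum lessThan_iff)
  also have "\<dots> = (\<Sum>k<N. a k * cnj (a k) * of_nat N)"
    by (simp add: if_distrib cong: if_cong)
  also have "\<dots> = (\<Sum>k<N. complex_of_real (real N * (norm (a k))\<^sup>2))"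
  proof (intro sum.cong refl)
    fix k
    have sq: "a k * cnj (a k) = complex_of_real ((norm (a k))\<^sup>2)" by (metis complex_norm_square)
    show "a k * cnj (a k) * of_nat N = complex_of_real (real N * (norm (a k))\<^sup>2)"
      by (simp only: sq of_real_mult of_real_of_nat_eq mult.commute)
  qed
  also have "\<dots> = complex_of_real (real N * (\<Sum>k<N. (norm (a k))\<^sup>2))"
    by (simp only: of_real_sum sum_distrib_left)
  finally show ?thesis by (simp only: of_real_eq_iff)
qed

lemma coeff_le1:
  assumes hol: "h holomorphic_on ball 0 1" and bd: "\<And>z. z \<in> ball 0 1 \<Longrightarrow> norm (h z) \<le> 1"
  shows "norm (taylor_coeff h k) \<le> 1"
proof -
  have ev: "eventually (\<lambda>\<rho>. norm (taylor_coeff h k) \<le> 1 / \<rho>^k) (at_left (1::real))"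
  proof -
    have "eventually (\<lambda>\<rho>. \<rho> \<in> {0<..<1}) (at_left (1::real))"
      by (rule eventually_at_left_real) simp
    then show ?thesis
    proof (rule eventually_mono)
      fix \<rho> :: real assume r: "\<rho> \<in> {0<..<1}"
      have "norm ((deriv ^^ k) h 0) \<le> fact k * 1 / \<rho>^k"
      proof (rule Cauchy_inequality)
        show "h holomorphic_on ball 0 \<rho>" by (rule holomorphic_on_subset[OF hol]) (use r in auto)
        have "h holomorphic_on cball 0 \<rho>" by (rule holomorphic_on_subset[OF hol]) (use r in auto)
        then show "continuous_on (cball 0 \<rho>) h" by (rule holomorphic_on_imp_continuous_on)
        show "0 < \<rho>" using r by simp
        show "norm (h x) \<le> 1" if "norm (0 - x) = \<rho>" for x using that r bd by auto
      qed
      then have "norm ((deriv ^^ k) h 0) / fact k \<le> (fact k * 1 / \<rho>^k) / fact k"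
        by (rule divide_right_mono) simp
      also have "\<dots> = 1 / \<rho>^k" by simp
      also have "norm ((deriv ^^ k) h 0) / fact k = norm (taylor_coeff h k)"
        unfolding taylor_coeff_def by (simp add: norm_divide)
      finally show "norm (taylor_coeff h k) \<le> 1 / \<rho>^k" .
    qed
  qed
  have "((\<lambda>\<rho>::real. 1 / \<rho>^k) \<longlongrightarrow> 1 / 1^k) (at_left 1)"
    by (intro tendsto_intros) auto
  then have "((\<lambda>\<rho>::real. 1 / \<rho>^k) \<longlongrightarrow> 1) (at_left 1)" by simp
  from tendsto_lowerbound[OF this ev trivial_limit_at_left_real] show ?thesis .
qed

lemma partial_bound:
  assumes hol: "h holomorphic_on ball 0 1" and bd: "\<And>z. z \<in> ball 0 1 \<Longrightarrow> norm (h z) \<le> 1"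
    and r: "0 < r" "r < 1" and x: "norm x = r"
  shows "norm (\<Sum>k<N. taylor_coeff h k * x^k) \<le> 1 + r^N / (1 - r)"
proof -
  define c where "c = taylor_coeff h"
  have xin: "x \<in> ball 0 1" using x r by simp
  have "(\<lambda>n. (deriv ^^ n) h 0 / fact n * (x - 0)^n) sums h x"
    by (rule holomorphic_power_series[OF hol xin])
  moreover have "(\<lambda>n. (deriv ^^ n) h 0 / fact n * (x - 0)^n) = (\<lambda>n. c n * x^n)"
    unfolding c_def taylor_coeff_def by simp
  ultimately have sm: "(\<lambda>n. c n * x^n) sums h x" by simp
  then have summ: "summable (\<lambda>n. c n * x^n)" by (rule sums_summable)
  have split: "h x = (\<Sum>i. c (i+N) * x^(i+N)) + (\<Sum>k<N. c k * x^k)"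
    using suminf_split_initial_segment[OF summ, of N] sums_unique[OF sm] by simp
  have cle: "norm (c n) \<le> 1" for n unfolding c_def by (rule coeff_le1[OF hol bd])
  have termle: "norm (c (i+N) * x^(i+N)) \<le> r^(i+N)" for i
  proof -
    have "norm (c (i+N) * x^(i+N)) = norm (c (i+N)) * r^(i+N)" by (simp add: norm_mult norm_power x)
    also have "\<dots> \<le> 1 * r^(i+N)" using r by (intro mult_right_mono cle) simp
    finally show ?thesis by simp
  qed
  have gs: "summable (\<lambda>i. r^(i+N))"
    by (rule summable_ignore_initial_segment) (rule summable_geometric, use r in simp)
  have ns: "summable (\<lambda>i. norm (c (i+N) * x^(i+N)))"
    by (rule summable_comparison_test[OF _ gs]) (use termle in simp)
  have "norm (\<Sum>i. c (i+N) * x^(i+N)) \<le> (\<Sum>i. norm (c (i+N) * x^(i+N)))"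
    by (rule summable_norm[OF ns])
  also have "\<dots> \<le> (\<Sum>i. r^(i+N))" by (rule suminf_le[OF termle ns gs])
  also have "(\<Sum>i. r^(i+N)) = r^N / (1 - r)"
  proof -
    have "(\<lambda>i. r^i) sums (1 / (1 - r))" by (rule geometric_sums) (use r in simp)
    then have "(\<lambda>i. r^N * r^i) sums (r^N * (1 / (1 - r)))" by (rule sums_mult)
    moreover have "(\<lambda>i. r^N * r^i) = (\<lambda>i. r^(i+N))" by (simp add: power_add mult.commute)
    ultimately show ?thesis using sums_unique by fastforce
  qed
  finally have tl: "norm (\<Sum>i. c (i+N) * x^(i+N)) \<le> r^N / (1 - r)" .
  have "(\<Sum>k<N. c k * x^k) = h x - (\<Sum>i. c (i+N) * x^(i+N))" using split by simp
  then have "norm (\<Sum>k<N. c k * x^k) \<le> norm (h x) + norm (\<Sum>i. c (i+N) * x^(i+N))"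
    by (simp add: norm_triangle_ineq4)
  also have "\<dots> \<le> 1 + r^N / (1 - r)" using bd[OF xin] tl by simp
  finally show ?thesis unfolding c_def .
qed

lemma H2_bound:
  assumes hol: "h holomorphic_on ball 0 1" and bd: "\<And>z. z \<in> ball 0 1 \<Longrightarrow> norm (h z) \<le> 1"
  shows "(\<Sum>k<K. (norm (taylor_coeff h k))\<^sup>2) \<le> 1"
proof -
  define c where "c = taylor_coeff h"
  have step: "(\<Sum>k<K. (norm (c k) * r^k)\<^sup>2) \<le> 1" if r: "0 < r" "r < 1" for r :: real
  proof -
    define M where "M N = 1 + r^N / (1 - r)" for N :: nat
    have A: "(\<Sum>k<N. (norm (c k) * r^k)\<^sup>2) \<le> (M N)\<^sup>2" if N: "N > 0" for N
    proof -
      define \<zeta> where "\<zeta> = cis (2*pi/N)"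
      have par: "(\<Sum>j<N. (norm (\<Sum>k<N. (c k * of_real (r^k)) * (\<zeta>^j)^k))\<^sup>2)
               = real N * (\<Sum>k<N. (norm (c k * of_real (r^k)))\<^sup>2)"
        unfolding \<zeta>_def by (rule disc_parseval)
      have each: "(norm (\<Sum>k<N. (c k * of_real (r^k)) * (\<zeta>^j)^k))\<^sup>2 \<le> (M N)\<^sup>2" for j
      proof -
        define x where "x = of_real r * \<zeta>^j"
        have nx: "norm x = r" unfolding x_def \<zeta>_def using r by (simp add: norm_mult norm_power)
        have "(\<Sum>k<N. (c k * of_real (r^k)) * (\<zeta>^j)^k) = (\<Sum>k<N. c k * x^k)"
          unfolding x_def by (simp add: power_mult_distrib mult.assoc)
        moreover have "norm (\<Sum>k<N. c k * x^k) \<le> M N"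
          unfolding c_def M_def by (rule partial_bound[OF hol bd r nx])
        ultimately show ?thesis by (simp add: power_mono)
      qed
      have "(\<Sum>j<N. (norm (\<Sum>k<N. (c k * of_real (r^k)) * (\<zeta>^j)^k))\<^sup>2) \<le> real (card {..<N}) * (M N)\<^sup>2"
        by (rule sum_bounded_above) (rule each)
      then have "real N * (\<Sum>k<N. (norm (c k * of_real (r^k)))\<^sup>2) \<le> real N * (M N)\<^sup>2"
        using par by simp
      then have "(\<Sum>k<N. (norm (c k * of_real (r^k)))\<^sup>2) \<le> (M N)\<^sup>2" using N by simp
      moreover have "norm (c k * of_real (r^k)) = norm (c k) * r^k" for k
        using r by (simp add: norm_mult norm_power)
      ultimately show ?thesis by simp
    qed
    have ev: "eventually (\<lambda>N. (\<Sum>k<K. (norm (c k) * r^k)\<^sup>2) \<le> (M N)\<^sup>2) sequentially"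
      unfolding eventually_sequentially
    proof (intro exI allI impI)
      fix N assume "Suc K \<le> N"
      then have "(\<Sum>k<K. (norm (c k) * r^k)\<^sup>2) \<le> (\<Sum>k<N. (norm (c k) * r^k)\<^sup>2)"
        by (intro sum_mono2) auto
      also have "\<dots> \<le> (M N)\<^sup>2" using A \<open>Suc K \<le> N\<close> by simp
      finally show "(\<Sum>k<K. (norm (c k) * r^k)\<^sup>2) \<le> (M N)\<^sup>2" .
    qed
    have "(\<lambda>N. (M N)\<^sup>2) \<longlonglongrightarrow> (1 + 0 / (1 - r))\<^sup>2"
      unfolding M_def by (intro tendsto_intros LIMSEQ_power_zero) (use r in auto)
    then have "(\<lambda>N. (M N)\<^sup>2) \<longlonglongrightarrow> 1" by simp
    from tendsto_lowerbound[OF this ev] show ?thesis by simp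
  qed
  have "((\<lambda>r::real. \<Sum>k<K. (norm (c k) * r^k)\<^sup>2) \<longlongrightarrow> (\<Sum>k<K. (norm (c k) * 1^k)\<^sup>2)) (at_left 1)"
    by (intro tendsto_intros)
  moreover have "eventually (\<lambda>r::real. (\<Sum>k<K. (norm (c k) * r^k)\<^sup>2) \<le> 1) (at_left 1)"
  proof -
    have "eventually (\<lambda>r. r \<in> {0<..<1}) (at_left (1::real))"
      by (rule eventually_at_left_real) simp
    then show ?thesis by (rule eventually_mono) (use step in auto)
  qed
  ultimately have "(\<Sum>k<K. (norm (c k) * 1^k)\<^sup>2) \<le> 1"
    by (rule tendsto_upperbound) simp
  then show ?thesis unfolding c_def by simp
qed

lemma amgm: fixes p q t :: real assumes "t > 0" shows "2*p*q \<le> t*p^2 + q^2/t"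
proof -
  have "0 \<le> (t*p - q)^2 / t" using assms by simp
  also have "(t*p - q)^2 / t = t*p^2 - 2*p*q + q^2/t" using assms
    by (simp add: power2_diff field_simps power2_eq_square)
  finally show ?thesis by simp
qed

lemma weak_lim:
  fixes c :: "nat \<Rightarrow> nat \<Rightarrow> complex" and \<gamma> :: "nat \<Rightarrow> complex" and w :: "nat \<Rightarrow> real" and a :: complex
  assumes wpos: "\<And>k. 0 < w k" and wle: "\<And>k. w k \<le> 1"
    and G: "summable (\<lambda>k. w k * (norm (\<gamma> k))\<^sup>2)"
    and B: "\<And>n K. (\<Sum>k<K. (norm (c n k))\<^sup>2) \<le> 1"
    and lim: "\<And>k. (\<lambda>n. c n k) \<longlonglongrightarrow> (if k = 0 then a else 0)"
  shows "(\<lambda>n. \<Sum>k. complex_of_real (w k) * c n k * cnj (\<gamma> k)) \<longlonglongrightarrow> complex_of_real (w 0) * a * cnj (\<gamma> 0)"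
proof -
  define f where "f n k = complex_of_real (w k) * c n k * cnj (\<gamma> k)" for n k
  define g where "g k = w k * (norm (\<gamma> k))\<^sup>2" for k
  define T where "T = complex_of_real (w 0) * a * cnj (\<gamma> 0)"
  have g0: "g k \<ge> 0" for k using wpos[of k] unfolding g_def by simp
  have csum: "summable (\<lambda>k. (norm (c n k))\<^sup>2)" for n
    by (rule summableI_nonneg_bounded[OF _ B]) simp
  have cle: "(\<Sum>k. (norm (c n k))\<^sup>2) \<le> 1" for n
    by (rule suminf_le_const[OF csum B])
  have fbound: "norm (f n k) \<le> (t * (norm (c n k))\<^sup>2 + g k / t) / 2" if t: "t > 0" for n k t
  proof -
    have "2 * norm (c n k) * (w k * norm (\<gamma> k)) \<le> t * (norm (c n k))\<^sup>2 + (w k * norm (\<gamma> k))\<^sup>2 / t"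
      by (rule amgm[OF t])
    moreover have "(w k * norm (\<gamma> k))\<^sup>2 \<le> g k"
    proof -
      have "(w k * norm (\<gamma> k))\<^sup>2 = w k * (w k * (norm (\<gamma> k))\<^sup>2)" by (simp add: power2_eq_square)
      also have "\<dots> \<le> 1 * (w k * (norm (\<gamma> k))\<^sup>2)"
        using wle[of k] wpos[of k] by (intro mult_right_mono) auto
      finally show ?thesis unfolding g_def by simp
    qed
    moreover have "norm (f n k) = norm (c n k) * (w k * norm (\<gamma> k))"
      unfolding f_def using wpos[of k] by (simp add: norm_mult)
    ultimately show ?thesis using t by (simp add: divide_right_mono field_simps)
  qed
  have fsum: "summable (\<lambda>k. norm (f n k))" for n
  proof (rule summable_comparison_test[where g = "\<lambda>k. (1 * (norm (c n k))\<^sup>2 + g k / 1) / 2"])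
    show "\<exists>N. \<forall>k\<ge>N. norm (norm (f n k)) \<le> (1 * (norm (c n k))\<^sup>2 + g k / 1) / 2"
      using fbound[of 1] by simp
    show "summable (\<lambda>k. (1 * (norm (c n k))\<^sup>2 + g k / 1) / 2)"
      using csum G unfolding g_def by (intro summable_divide summable_add) auto
  qed
  show ?thesis unfolding LIMSEQ_iff
  proof (intro allI impI)
    fix \<epsilon> :: real assume \<epsilon>: "\<epsilon> > 0"
    define t where "t = \<epsilon> / 2"
    have t: "t > 0" using \<epsilon> unfolding t_def by simp
    have Gs: "summable g" using G unfolding g_def .
    obtain K0 where K0: "\<And>K. K \<ge> K0 \<Longrightarrow> norm (\<Sum>i. g (i + K)) < t * \<epsilon> / 2"
      using suminf_exist_split[of "t * \<epsilon> / 2" g] Gs t \<epsilon> by auto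
    define K where "K = Suc K0"
    have gtail: "(\<Sum>i. g (i + K)) < t * \<epsilon> / 2"
    proof -
      have "(\<Sum>i. g (i + K)) \<ge> 0" by (intro suminf_nonneg summable_ignore_initial_segment Gs g0)
      then show ?thesis using K0[of K] unfolding K_def by simp
    qed
    define d where "d n k = f n k - (if k = 0 then T else 0)" for n k
    have dlim: "(\<lambda>n. norm (d n k)) \<longlonglongrightarrow> 0" for k
    proof -
      have "(\<lambda>n. f n k) \<longlonglongrightarrow> complex_of_real (w k) * (if k = 0 then a else 0) * cnj (\<gamma> k)"
        unfolding f_def by (intro tendsto_intros lim)
      moreover have "complex_of_real (w k) * (if k = 0 then a else 0) * cnj (\<gamma> k) = (if k = 0 then T else 0)"
        unfolding T_def by simp
      ultimately have "(\<lambda>n. d n k) \<longlonglongrightarrow> 0"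
        unfolding d_def using tendsto_diff[of "\<lambda>n. f n k" _ sequentially "\<lambda>n. if k = 0 then T else 0"] by fastforce
      then show ?thesis by (simp add: tendsto_norm_zero)
    qed
    have "(\<lambda>n. \<Sum>k<K. norm (d n k)) \<longlonglongrightarrow> (\<Sum>k<K. 0)"
      by (intro tendsto_sum dlim)
    then have "(\<lambda>n. \<Sum>k<K. norm (d n k)) \<longlonglongrightarrow> 0" by simp
    then obtain n0 where n0: "\<And>n. n \<ge> n0 \<Longrightarrow> norm (\<Sum>k<K. norm (d n k)) < \<epsilon> / 2"
      unfolding LIMSEQ_iff using \<epsilon> by (metis diff_zero half_gt_zero)
    show "\<exists>no. \<forall>n\<ge>no. norm ((\<Sum>k. complex_of_real (w k) * c n k * cnj (\<gamma> k)) - complex_of_real (w 0) * a * cnj (\<gamma> 0)) < \<epsilon>"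
    proof (intro exI allI impI)
      fix n assume "n \<ge> n0"
      have head: "(\<Sum>k<K. norm (d n k)) < \<epsilon> / 2"
        using n0[OF \<open>n \<ge> n0\<close>] by (simp add: sum_nonneg)
      have fs: "summable (f n)" using fsum[of n] by (rule summable_norm_cancel)
      have ds: "(d n) sums (suminf (f n) - T)"
        unfolding d_def by (intro sums_diff summable_sums fs) (rule sums_single[of 0 "\<lambda>_. T", simplified])
      then have dsm: "summable (d n)" by (rule sums_summable)
      have "suminf (f n) - T = (\<Sum>i. d n (i + K)) + (\<Sum>k<K. d n k)"
        using suminf_split_initial_segment[OF dsm, of K] sums_unique[OF ds] by simp
      moreover have "(\<lambda>i. d n (i + K)) = (\<lambda>i. f n (i + K))" unfolding d_def K_def by auto
      ultimately have eq: "suminf (f n) - T = (\<Sum>i. f n (i + K)) + (\<Sum>k<K. d n k)" by simp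
      have fts: "summable (\<lambda>i. norm (f n (i + K)))"
        using summable_ignore_initial_segment[OF fsum[of n], of K] .
      have cts: "summable (\<lambda>i. (norm (c n (i + K)))\<^sup>2)"
        using summable_ignore_initial_segment[OF csum[of n], of K] .
      have gts: "summable (\<lambda>i. g (i + K))" using summable_ignore_initial_segment[OF Gs, of K] .
      have ctail: "(\<Sum>i. (norm (c n (i + K)))\<^sup>2) \<le> 1"
      proof -
        have "(\<Sum>k. (norm (c n k))\<^sup>2) = (\<Sum>i. (norm (c n (i + K)))\<^sup>2) + (\<Sum>k<K. (norm (c n k))\<^sup>2)"
          by (rule suminf_split_initial_segment[OF csum])
        moreover have "(\<Sum>k<K. (norm (c n k))\<^sup>2) \<ge> 0" by (simp add: sum_nonneg)
        ultimately show ?thesis using cle[of n] by linarith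
      qed
      have "norm (\<Sum>i. f n (i + K)) \<le> (\<Sum>i. norm (f n (i + K)))" by (rule summable_norm[OF fts])
      also have "\<dots> \<le> (\<Sum>i. (t * (norm (c n (i + K)))\<^sup>2 + g (i + K) / t) / 2)"
        by (rule suminf_le[OF _ fts]) (use fbound[OF t] cts gts in \<open>auto intro!: summable_divide summable_add summable_mult\<close>)
      also have "\<dots> = (t * (\<Sum>i. (norm (c n (i + K)))\<^sup>2) + (\<Sum>i. g (i + K)) / t) / 2"
      proof -
        have "(\<lambda>i. (t * (norm (c n (i + K)))\<^sup>2 + g (i + K) / t) / 2) sums
              ((t * (\<Sum>i. (norm (c n (i + K)))\<^sup>2) + (\<Sum>i. g (i + K)) / t) / 2)"
          by (intro sums_divide sums_add sums_mult summable_sums cts gts)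
        then show ?thesis by (rule sums_unique[symmetric])
      qed
      also have "\<dots> < (t * 1 + (t * \<epsilon> / 2) / t) / 2"
      proof -
        have "t * (\<Sum>i. (norm (c n (i + K)))\<^sup>2) \<le> t * 1" using ctail t by (intro mult_left_mono) auto
        moreover have "(\<Sum>i. g (i + K)) / t < (t * \<epsilon> / 2) / t" using gtail t by (intro divide_strict_right_mono) auto
        ultimately have "t * (\<Sum>i. (norm (c n (i + K)))\<^sup>2) + (\<Sum>i. g (i + K)) / t < t * 1 + (t * \<epsilon> / 2) / t"
          by (rule add_le_less_mono)
        then show ?thesis by (rule divide_strict_right_mono) simp
      qed
      also have "\<dots> = \<epsilon> / 2" using t unfolding t_def by (simp add: field_simps)
      finally have tailb: "norm (\<Sum>i. f n (i + K)) < \<epsilon> / 2" .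
      have "norm (suminf (f n) - T) \<le> norm (\<Sum>i. f n (i + K)) + norm (\<Sum>k<K. d n k)"
        unfolding eq by (rule norm_triangle_ineq)
      also have "\<dots> \<le> norm (\<Sum>i. f n (i + K)) + (\<Sum>k<K. norm (d n k))"
        by (intro add_left_mono norm_sum)
      also have "\<dots> < \<epsilon>" using tailb head by simp
      finally show "norm ((\<Sum>k. complex_of_real (w k) * c n k * cnj (\<gamma> k)) - complex_of_real (w 0) * a * cnj (\<gamma> 0)) < \<epsilon>"
        unfolding f_def T_def by simp
    qed
  qed
qed

lemma coeff_conv:
  assumes hol: "\<And>n. H n holomorphic_on ball 0 1"
    and unif: "\<And>\<epsilon>. \<epsilon> > 0 \<Longrightarrow> eventually (\<lambda>n. \<forall>z\<in>cball 0 (1/2). norm (H n z - a) \<le> \<epsilon>) sequentially"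
  shows "(\<lambda>n. taylor_coeff (H n) k) \<longlonglongrightarrow> (if k = 0 then a else 0)"
proof (cases "k = 0")
  case True
  have "(\<lambda>n. H n 0) \<longlonglongrightarrow> a"
    unfolding LIMSEQ_iff
  proof (intro allI impI)
    fix r :: real assume r: "r > 0"
    from unif[of "r/2"] r obtain N where "\<And>n. n \<ge> N \<Longrightarrow> \<forall>z\<in>cball 0 (1/2). norm (H n z - a) \<le> r/2"
      unfolding eventually_sequentially by auto
    show "\<exists>no. \<forall>n\<ge>no. norm (H n 0 - a) < r"
    proof (intro exI allI impI)
      fix n assume "N \<le> n"
      then have "norm (H n 0 - a) \<le> r/2" using \<open>\<And>n. n \<ge> N \<Longrightarrow> \<forall>z\<in>cball 0 (1/2). norm (H n z - a) \<le> r/2\<close>[of n] by simp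
      then show "norm (H n 0 - a) < r" using r by simp
    qed
  qed
  then show ?thesis using True unfolding taylor_coeff_def by simp
next
  case False
  have "(\<lambda>n. taylor_coeff (H n) k) \<longlonglongrightarrow> 0"
    unfolding LIMSEQ_iff
  proof (intro allI impI)
    fix r :: real assume r: "r > 0"
    define e where "e = r / (2 * 2^k)"
    have e: "e > 0" using r unfolding e_def by simp
    from unif[OF e] obtain N where N: "\<And>n. n \<ge> N \<Longrightarrow> \<forall>z\<in>cball 0 (1/2). norm (H n z - a) \<le> e"
      unfolding eventually_sequentially by auto
    show "\<exists>no. \<forall>n\<ge>no. norm (taylor_coeff (H n) k - 0) < r"
    proof (intro exI allI impI)
      fix n assume "n \<ge> N"
      have "norm ((deriv ^^ k) (\<lambda>z. H n z - a) 0) \<le> fact k * e / (1/2)^k"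
      proof (rule Cauchy_inequality)
        show "(\<lambda>z. H n z - a) holomorphic_on ball 0 (1/2)"
          by (intro holomorphic_intros holomorphic_on_subset[OF hol]) auto
        have "(\<lambda>z. H n z - a) holomorphic_on cball 0 (1/2)"
          by (intro holomorphic_intros holomorphic_on_subset[OF hol]) auto
        then show "continuous_on (cball 0 (1/2)) (\<lambda>z. H n z - a)" by (rule holomorphic_on_imp_continuous_on)
        show "norm (H n x - a) \<le> e" if "norm (0 - x) = 1/2" for x
          using N[OF \<open>n \<ge> N\<close>] that by auto
      qed simp
      moreover have "(deriv ^^ k) (\<lambda>z. H n z - a) 0 = (deriv ^^ k) (H n) 0"
      proof -
        have "(deriv ^^ k) (\<lambda>z. H n z - a) 0 = (deriv ^^ k) (H n) 0 - (deriv ^^ k) (\<lambda>z. a) 0"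
          by (rule higher_deriv_diff[OF hol holomorphic_on_const]) auto
        then show ?thesis using False by (simp add: higher_deriv_const)
      qed
      ultimately have "norm ((deriv ^^ k) (H n) 0) \<le> fact k * e * 2^k" by (simp add: power_one_over)
      then have "norm ((deriv ^^ k) (H n) 0) / fact k \<le> (fact k * e * 2^k) / fact k"
        by (rule divide_right_mono) simp
      then have "norm (taylor_coeff (H n) k) \<le> e * 2^k"
        unfolding taylor_coeff_def by (simp add: norm_divide)
      also have "e * 2^k = r / 2" unfolding e_def by simp
      finally show "norm (taylor_coeff (H n) k - 0) < r" using r by simp
    qed
  qed
  then show ?thesis using False by simp
qed

lemma iter_props:
  assumes hol: "\<phi> holomorphic_on ball 0 1" and self: "\<And>z. z \<in> ball 0 1 \<Longrightarrow> \<phi> z \<in> ball 0 1"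
  shows "(\<phi>^^n) holomorphic_on ball 0 1 \<and> (\<forall>z\<in>ball 0 1. (\<phi>^^n) z \<in> ball 0 1)"
proof (induction n)
  case 0 then show ?case by (simp add: holomorphic_on_ident[unfolded id_def])
next
  case (Suc n)
  have "(\<phi> \<circ> (\<phi>^^n)) holomorphic_on ball 0 1"
    by (rule holomorphic_on_compose_gen[OF _ hol]) (use Suc in auto)
  then have "(\<phi>^^Suc n) holomorphic_on ball 0 1" by (simp only: funpow.simps(2))
  moreover have "\<forall>z\<in>ball 0 1. (\<phi>^^Suc n) z \<in> ball 0 1" using Suc self by simp
  ultimately show ?case by blast
qed

lemma comp_iter:
  assumes self: "\<And>z. z \<in> ball 0 1 \<Longrightarrow> \<phi> z \<in> ball 0 1"
  shows "(comp_op \<phi> ^^ n) (ind_pow m) = (\<lambda>z. if z \<in> ball 0 1 then ((\<phi>^^n) z) ^ m else 0)"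
proof (induction n)
  case 0 show ?case by (rule ext) (simp add: ind_pow_def)
next
  case (Suc n)
  have "(comp_op \<phi> ^^ Suc n) (ind_pow m) = comp_op \<phi> ((comp_op \<phi> ^^ n) (ind_pow m))" by simp
  also have "\<dots> = comp_op \<phi> (\<lambda>z. if z \<in> ball 0 1 then ((\<phi>^^n) z) ^ m else 0)" by (simp only: Suc)
  also have "\<dots> = (\<lambda>z. if z \<in> ball 0 1 then ((\<phi>^^Suc n) z) ^ m else 0)"
  proof
    fix z
    have e: "(\<phi>^^Suc n) z = (\<phi>^^n) (\<phi> z)" by (simp only: funpow_Suc_right o_apply)
    show "comp_op \<phi> (\<lambda>z. if z \<in> ball 0 1 then ((\<phi>^^n) z) ^ m else 0) z = (if z \<in> ball 0 1 then ((\<phi>^^Suc n) z) ^ m else 0)"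
      unfolding comp_op_def e using self[of z] by simp
  qed
  finally show ?case .
qed

theorem theorem4p3:
  fixes \<beta> :: real and \<phi> :: "complex \<Rightarrow> complex"
  assumes "\<beta> > -1"
    and "hyperbolic_lf \<phi>"
  shows "\<not> complex_symmetric \<beta> (comp_op \<phi>)"
proof
  assume "complex_symmetric \<beta> (comp_op \<phi>)"
  then obtain C T' where conj: "is_conjugation \<beta> C" and adj: "is_adjoint \<beta> (comp_op \<phi>) T'"
    and comm: "\<forall>f\<in>A2 \<beta>. C (comp_op \<phi> f) = T' (C f)"
    unfolding complex_symmetric_def by blast
  from assms(2) obtain a b c d \<omega> where lf: "lf_selfmap_coeffs \<phi> a b c d" and \<omega>: "norm \<omega> = 1"
    and unif\<phi>: "\<forall>K. compact K \<and> K \<subseteq> ball 0 1 \<longrightarrow> uniform_limit K (\<lambda>n. \<phi> ^^ n) (\<lambda>_. \<omega>) sequentially"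
    unfolding hyperbolic_lf_def by blast
  have \<phi>eq: "\<phi> = (\<lambda>z. (a*z+b)/(c*z+d))" using lf unfolding lf_selfmap_coeffs_def by auto
  have den: "\<And>z. z \<in> ball 0 1 \<Longrightarrow> c*z+d \<noteq> 0" and self: "\<And>z. z \<in> ball 0 1 \<Longrightarrow> \<phi> z \<in> ball 0 1"
    using lf unfolding lf_selfmap_coeffs_def by auto
  have hol\<phi>: "\<phi> holomorphic_on ball 0 1"
    unfolding \<phi>eq by (intro holomorphic_intros) (use den in auto)
  define T where "T = comp_op \<phi>"
  define one where "one = ind_pow 0"
  have oneA: "one \<in> A2 \<beta>" unfolding one_def by (rule ind_pow_A2[OF assms(1)])
  have Tone: "T one = one"
  proof
    fix z show "T one z = one z"
      using self[of z] unfolding T_def one_def comp_op_def ind_pow_def by auto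
  qed
  have CA: "\<And>f. f \<in> A2 \<beta> \<Longrightarrow> C f \<in> A2 \<beta>"
    and Cscal: "\<And>f a. f \<in> A2 \<beta> \<Longrightarrow> C (\<lambda>z. a * f z) = (\<lambda>z. cnj a * C f z)"
    and Cinv: "\<And>f. f \<in> A2 \<beta> \<Longrightarrow> C (C f) = f"
    using conj unfolding is_conjugation_def by auto
  have TA: "\<And>f. f \<in> A2 \<beta> \<Longrightarrow> T f \<in> A2 \<beta>"
    and adjrel: "\<And>f g. f \<in> A2 \<beta> \<Longrightarrow> g \<in> A2 \<beta> \<Longrightarrow> A2_inner \<beta> (T f) g = A2_inner \<beta> f (T' g)"
    using adj unfolding is_adjoint_def T_def by auto
  define g where "g = C one"
  have gA: "g \<in> A2 \<beta>" unfolding g_def by (rule CA[OF oneA])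
  have T'g: "T' g = g" unfolding g_def using comm oneA Tone unfolding T_def by metis
  have C0: "C (\<lambda>z. 0) = (\<lambda>z. 0)"
    using Cscal[OF oneA, of 0] by simp
  have gnz: "g \<noteq> (\<lambda>z. 0)"
  proof
    assume "g = (\<lambda>z. 0)"
    then have "one = (\<lambda>z. 0)" using Cinv[OF oneA] C0 unfolding g_def by simp
    then show False unfolding one_def ind_pow_def by (metis centre_in_ball zero_less_one one_neq_zero power_0)
  qed
  have inv: "(T^^n) f \<in> A2 \<beta> \<and> A2_inner \<beta> ((T^^n) f) g = A2_inner \<beta> f g" if "f \<in> A2 \<beta>" for n f
  proof (induction n)
    case 0 then show ?case using that by simp
  next
    case (Suc n)
    then have A: "(T^^n) f \<in> A2 \<beta>" by simp
    have "(T^^Suc n) f = T ((T^^n) f)" by simp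
    moreover have "A2_inner \<beta> (T ((T^^n) f)) g = A2_inner \<beta> ((T^^n) f) g"
      using adjrel[OF A gA] T'g by simp
    ultimately show ?case using Suc TA[OF A] by simp
  qed
  define \<gamma> where "\<gamma> = taylor_coeff g"
  define w where "w = bergman_weight \<beta>"
  have wpos: "\<And>k. 0 < w k" and wle: "\<And>k. w k \<le> 1" and w0: "w 0 = 1"
    unfolding w_def using bw_pos[OF assms(1)] bw_le1[OF assms(1)] bw_0[OF assms(1)] by auto
  have G: "summable (\<lambda>k. w k * (norm (\<gamma> k))\<^sup>2)"
    using gA unfolding A2_def w_def \<gamma>_def by auto
  have key: "complex_of_real (w m) * cnj (\<gamma> m) = \<omega>^m * cnj (\<gamma> 0)" for m
  proof -
    define H where "H n = (\<lambda>z. ((\<phi>^^n) z) ^ m)" for n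
    have it: "(\<phi>^^n) holomorphic_on ball 0 1 \<and> (\<forall>z\<in>ball 0 1. (\<phi>^^n) z \<in> ball 0 1)" for n
      by (rule iter_props[OF hol\<phi> self])
    have holH: "H n holomorphic_on ball 0 1" for n
      unfolding H_def using it[of n] by (intro holomorphic_intros) auto
    have bdH: "norm (H n z) \<le> 1" if "z \<in> ball 0 1" for n z
    proof -
      have "norm ((\<phi>^^n) z) < 1" using it[of n] that by auto
      then show ?thesis unfolding H_def by (simp add: norm_power power_le_one)
    qed
    have eqT: "(T^^n) (ind_pow m) = (\<lambda>z. if z \<in> ball 0 1 then H n z else 0)" for n
      unfolding T_def H_def by (rule comp_iter[OF self])
    have tcH: "taylor_coeff ((T^^n) (ind_pow m)) k = taylor_coeff (H n) k" for n k
      unfolding eqT by (rule taylor_coeff_cong) simp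
    have seq: "A2_inner \<beta> ((T^^n) (ind_pow m)) g = (\<Sum>k. complex_of_real (w k) * taylor_coeff (H n) k * cnj (\<gamma> k))" for n
      unfolding A2_inner_def w_def \<gamma>_def tcH ..
    have const: "A2_inner \<beta> ((T^^n) (ind_pow m)) g = complex_of_real (w m) * cnj (\<gamma> m)" for n
      using inv[OF ind_pow_A2[OF assms(1)], of n] inner_ind_pow[of \<beta> m g] unfolding w_def \<gamma>_def by simp
    have unifH: "eventually (\<lambda>n. \<forall>z\<in>cball 0 (1/2). norm (H n z - \<omega>^m) \<le> \<epsilon>) sequentially" if e: "\<epsilon> > 0" for \<epsilon>
    proof -
      have "compact (cball (0::complex) (1/2)) \<and> cball (0::complex) (1/2) \<subseteq> ball 0 1" by auto
      then have ul: "uniform_limit (cball 0 (1/2)) (\<lambda>n. \<phi> ^^ n) (\<lambda>_. \<omega>) sequentially" using unif\<phi> by blast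
      have "\<epsilon> / (real m + 1) > 0" using e by simp
      then have "eventually (\<lambda>n. \<forall>z\<in>cball 0 (1/2). dist ((\<phi>^^n) z) \<omega> < \<epsilon> / (real m + 1)) sequentially"
        using ul unfolding uniform_limit_iff by blast
      then show ?thesis
      proof (rule eventually_mono)
        fix n assume A: "\<forall>z\<in>cball 0 (1/2). dist ((\<phi>^^n) z) \<omega> < \<epsilon> / (real m + 1)"
        show "\<forall>z\<in>cball 0 (1/2). norm (H n z - \<omega>^m) \<le> \<epsilon>"
        proof
          fix z :: complex assume z: "z \<in> cball 0 (1/2)"
          then have zb: "z \<in> ball 0 1" by auto
          have n1: "norm ((\<phi>^^n) z) \<le> 1" using it[of n] zb by (auto simp: less_imp_le)
          have "norm (H n z - \<omega>^m) \<le> real m * norm ((\<phi>^^n) z - \<omega>)"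
            unfolding H_def by (rule norm_power_diff[OF n1]) (simp add: \<omega>)
          also have "\<dots> \<le> real m * (\<epsilon> / (real m + 1))"
            using A z by (intro mult_left_mono) (auto simp: dist_norm less_imp_le)
          also have "\<dots> \<le> \<epsilon>" using e by (simp add: field_simps)
          finally show "norm (H n z - \<omega>^m) \<le> \<epsilon>" .
        qed
      qed
    qed
    have B: "(\<Sum>k<K. (norm (taylor_coeff (H n) k))\<^sup>2) \<le> 1" for n K
      by (rule H2_bound[OF holH bdH])
    have lim: "(\<lambda>n. taylor_coeff (H n) k) \<longlonglongrightarrow> (if k = 0 then \<omega>^m else 0)" for k
      by (rule coeff_conv[OF holH unifH])
    have "(\<lambda>n. \<Sum>k. complex_of_real (w k) * taylor_coeff (H n) k * cnj (\<gamma> k)) \<longlonglongrightarrow> complex_of_real (w 0) * \<omega>^m * cnj (\<gamma> 0)"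
      by (rule weak_lim[OF wpos wle G B lim])
    then have "(\<lambda>n. complex_of_real (w m) * cnj (\<gamma> m)) \<longlonglongrightarrow> \<omega>^m * cnj (\<gamma> 0)"
      using seq const w0 by simp
    then show ?thesis using LIMSEQ_const_iff by blast
  qed
  have lower: "(norm (\<gamma> 0))\<^sup>2 \<le> w m * (norm (\<gamma> m))\<^sup>2" for m
  proof -
    have "norm (complex_of_real (w m) * cnj (\<gamma> m)) = norm (\<omega>^m * cnj (\<gamma> 0))" using key[of m] by simp
    then have e: "w m * norm (\<gamma> m) = norm (\<gamma> 0)" using wpos[of m] \<omega> by (simp add: norm_mult norm_power)
    have "(norm (\<gamma> 0))\<^sup>2 = w m * (w m * (norm (\<gamma> m))\<^sup>2)" unfolding e[symmetric] by (simp add: power2_eq_square)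
    also have "\<dots> \<le> 1 * (w m * (norm (\<gamma> m))\<^sup>2)"
      using wle[of m] wpos[of m] by (intro mult_right_mono) auto
    finally show ?thesis by simp
  qed
  have "(\<lambda>m. w m * (norm (\<gamma> m))\<^sup>2) \<longlonglongrightarrow> 0" by (rule summable_LIMSEQ_zero[OF G])
  then have "(norm (\<gamma> 0))\<^sup>2 \<le> 0"
    by (rule tendsto_lowerbound) (use lower in auto)
  then have g0: "\<gamma> 0 = 0" by simp
  have "\<gamma> m = 0" for m
    using key[of m] g0 wpos[of m] by simp
  then have "g = (\<lambda>z. 0)" using A2_zero[OF gA] unfolding \<gamma>_def by blast
  with gnz show False by simp
qed

end
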